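(* Let $N\ge1$ be an integer and $\beta,\gamma,\xi,\eta,D,R>0$. Define, for $z>0$, $$\bar C(z)=\frac{\gamma\xi R^2\,e^{-\frac{R^2}{4zD}-\eta z}}{8z^2D^2},\qquad g(t)=N\int_0^t\bar C(t-\tau)\,d\tau,$$ and consider the planar linear nonautonomous system in $\mathbf{y}=(V,X)\in\mathbb{R}^2$ $$\dot V=-\beta V-g(t)X,\qquad \dot X=V.$$ Fix $\bar t>0$. Then the system admits a Lyapunov function $U(t,\mathbf{y})$ and positive constants $k_1,k_2,k_3$ such that, for all $t\ge\bar t$ and all $\mathbf{y}\in\mathbb{R}^2$, (a) $k_2\|\mathbf{y}\|^2\le U(t,\mathbf{y})\le k_1\|\mathbf{y}\|^2$; (b) $\dot U(t,\mathbf{y})=\frac{\partial U}{\partial t}+\frac{\partial U}{\partial V}\dot V+\frac{\partial U}{\partial X}\dot X\le -k_3\|\mathbf{y}\|^2$, where $\dot V,\dot X$ are given by the system.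
   Context: This planar system is the linearization, written in centre-of-mass variables for each particle and each coordinate, of a hybrid model of $N$ particles in $\mathbb{R}^2$ with Cucker–Smale alignment (strength $\beta$) and chemotaxis towards a signal diffusing with coefficient $D$, degrading at rate $\eta$, produced at rate $\xi$ on discs of radius $R$, with chemotactic sensitivity $\gamma$. $\|\cdot\|$ is the Euclidean norm. *)

theory Defs
  imports "HOL-Analysis.Analysis"
begin

definition Cbar :: "real \<Rightarrow> real \<Rightarrow> real \<Rightarrow> real \<Rightarrow> real \<Rightarrow> real \<Rightarrow> real" where
  "Cbar \<gamma> \<xi> \<eta> D R z =
     \<gamma> * \<xi> * R^2 * exp (- (R^2 / (4 * z * D)) - \<eta> * z) / (8 * z^2 * D^2)"

definition gfun :: "nat \<Rightarrow> real \<Rightarrow> real \<Rightarrow> real \<Rightarrow> real \<Rightarrow> real \<Rightarrow> real \<Rightarrow> real" where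
  "gfun N \<gamma> \<xi> \<eta> D R t = real N * integral {0..t} (\<lambda>\<tau>. Cbar \<gamma> \<xi> \<eta> D R (t - \<tau>))"

end

theory Submission imports Defs begin


lemma gfun_eq:
  "gfun N \<gamma> \<xi> \<eta> D R t = real N * integral {0..t} (Cbar \<gamma> \<xi> \<eta> D R)"
proof -
  let ?f = "Cbar \<gamma> \<xi> \<eta> D R"
  have "integral {0..t} (\<lambda>\<tau>. ?f (t - \<tau>)) = integral {-t..0} (\<lambda>y. ?f (t+y))"
    using Henstock_Kurzweil_Integration.integral_reflect_real[of 0 "-t" "\<lambda>y. ?f (t+y)"] by (simp only: minus_zero minus_minus add_uminus_conv_diff)
  also have "\<dots> = integral {-t..0} (?f \<circ> (+) t)" by (simp add: o_def)
  also have "\<dots> = integral {-t+t..0+t} ?f" by (rule integral_shift_Icc_real)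
  finally show ?thesis by (simp add: gfun_def)
qed

lemma exp_sq_bound: assumes "x \<ge> 0" shows "(x::real)^2 / 4 \<le> exp x"
proof -
  have "x/2 \<le> exp (x/2)" using exp_ge_add_one_self[of "x/2"] by linarith
  hence "(x/2)^2 \<le> (exp (x/2))^2" using assms by (intro power_mono) auto
  also have "(exp (x/2))^2 = exp x" by (simp add: power2_eq_square flip: exp_add)
  finally show ?thesis by (simp add: power_divide)
qed

lemma exp_cube_bound: assumes "x \<ge> 0" shows "(x::real)^3 / 27 \<le> exp x"
proof -
  have "x/3 \<le> exp (x/3)" using exp_ge_add_one_self[of "x/3"] by linarith
  hence "(x/3)^3 \<le> (exp (x/3))^3" using assms by (intro power_mono) auto
  also have "(exp (x/3))^3 = exp x" by (simp add: power3_eq_cube flip: exp_add)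
  finally show ?thesis by (simp add: power_divide)
qed

lemma Cbar_form:
  assumes "z > 0" "D > 0"
  shows "Cbar \<gamma> \<xi> \<eta> D R z = \<gamma> * \<xi> * R^2 / (8 * D^2) * (exp (- ((R^2/(4*D)) / z)) / z^2) * exp (-\<eta>*z)"
proof -
  have "- (R^2 / (4 * z * D)) - \<eta> * z = - ((R^2/(4*D)) / z) + (-\<eta>*z)" by simp
  hence "exp (- (R^2 / (4 * z * D)) - \<eta> * z) = exp (- ((R^2/(4*D)) / z) + (-\<eta>*z))"
    by (simp only:)
  also have "\<dots> = exp (- ((R^2/(4*D)) / z)) * exp (-\<eta>*z)" by (rule exp_add)
  finally have "exp (- (R^2 / (4 * z * D)) - \<eta> * z) = exp (- ((R^2/(4*D)) / z)) * exp (-\<eta>*z)" .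
  thus ?thesis using assms by (simp add: Cbar_def ac_simps)
qed

lemma exp_neg_div_bound2:
  fixes z A :: real
  assumes "z > 0" "A > 0"
  shows "exp (- (A / z)) / z^2 \<le> 4 / A^2"
proof -
  have "(A/z)^2/4 \<le> exp (A/z)" using assms by (intro exp_sq_bound) auto
  hence "A^2 / (4*z^2) \<le> exp (A/z)" by (simp add: power_divide)
  hence "exp (A/z) * (4*z^2) \<ge> A^2" using assms by (simp add: field_simps)
  hence "4*z^2 \<ge> A^2 * exp (-(A/z))" using assms
    by (simp add: exp_minus field_simps)
  thus ?thesis using assms by (simp add: field_simps)
qed

lemma exp_neg_div_bound3:
  fixes z A :: real
  assumes "z > 0" "A > 0"
  shows "exp (- (A / z)) / z^2 \<le> 27 / A^3 * z"
proof -
  have "(A/z)^3/27 \<le> exp (A/z)" using assms by (intro exp_cube_bound) auto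
  hence "A^3 / (27*z^3) \<le> exp (A/z)" by (simp add: power_divide)
  hence "exp (A/z) * (27*z^3) \<ge> A^3" using assms by (simp add: field_simps)
  hence "27*z^3 \<ge> A^3 * exp (-(A/z))" using assms
    by (simp add: exp_minus field_simps)
  thus ?thesis using assms by (simp add: field_simps power2_eq_square power3_eq_cube)
qed

locale params =
  fixes \<gamma> \<xi> \<eta> D R :: real
  assumes pos: "\<gamma> > 0" "\<xi> > 0" "\<eta> > 0" "D > 0" "R > 0"
begin

definition "C = Cbar \<gamma> \<xi> \<eta> D R"
definition "A = R^2/(4*D)"
definition "P = \<gamma> * \<xi> * R^2 / (8 * D^2)"

lemma A_pos: "A > 0" using pos by (simp add: A_def)
lemma P_pos: "P > 0" using pos by (simp add: P_def)

lemma C_form: "z > 0 \<Longrightarrow> C z = P * (exp (- (A / z)) / z^2) * exp (-\<eta>*z)"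
  using Cbar_form[of z D] pos by (simp add: C_def A_def P_def)

lemma C_pos: "z > 0 \<Longrightarrow> C z > 0"
  using C_form P_pos by simp

lemma C_le_exp: "z > 0 \<Longrightarrow> C z \<le> P * (4 / A^2) * exp (-\<eta>*z)"
proof -
  assume z: "z > 0"
  have "P * (exp (- (A / z)) / z^2) \<le> P * (4 / A^2)"
    using exp_neg_div_bound2[OF z A_pos] P_pos by (intro mult_left_mono) auto
  hence "P * (exp (- (A / z)) / z^2) * exp (-\<eta>*z) \<le> P * (4 / A^2) * exp (-\<eta>*z)"
    by (intro mult_right_mono) auto
  thus ?thesis using C_form[OF z] by simp
qed

lemma C_le_lin: "z > 0 \<Longrightarrow> C z \<le> P * (27 / A^3) * z"
proof -
  assume z: "z > 0"
  have "C z \<le> P * (exp (- (A / z)) / z^2) * 1"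
    unfolding C_form[OF z] using P_pos z pos
    by (intro mult_left_mono) auto
  also have "\<dots> \<le> P * (27 / A^3 * z)"
    using exp_neg_div_bound3[OF z A_pos] P_pos by (simp only: mult_1_right) (intro mult_left_mono, auto)
  finally show ?thesis by (simp add: ac_simps)
qed

lemma C0: "C 0 = 0" by (simp add: C_def Cbar_def)

lemma C_cont: "continuous_on {0..} C"
proof (clarsimp simp: continuous_on_eq_continuous_within)
  fix z :: real assume z: "0 \<le> z"
  show "continuous (at z within {0..}) C"
  proof (cases "z = 0")
    case False
    hence "isCont C z" using z pos unfolding C_def Cbar_def
      by (intro continuous_intros) auto
    thus ?thesis by (rule continuous_at_imp_continuous_at_within)
  next
    case True
    have "(C \<longlongrightarrow> 0) (at 0 within {0<..})"
    proof (rule tendsto_sandwich[where f="\<lambda>_. 0" and h="\<lambda>z. P * (27 / A^3) * z"])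
      show "\<forall>\<^sub>F x in at 0 within {0<..}. 0 \<le> C x"
        by (auto simp: eventually_at_filter less_imp_le[OF C_pos])
      show "\<forall>\<^sub>F x in at 0 within {0<..}. C x \<le> P * (27 / A^3) * x"
        unfolding eventually_at_filter by (rule always_eventually) (intro allI impI C_le_lin, simp)
      show "((\<lambda>_. 0) \<longlongrightarrow> (0::real)) (at 0 within {0<..})" by simp
      have "((\<lambda>z. P * (27 / A^3) * z) \<longlongrightarrow> P * (27 / A^3) * 0) (at 0 within {0<..})"
        by (intro tendsto_intros)
      thus "((\<lambda>z. P * (27 / A^3) * z) \<longlongrightarrow> 0) (at 0 within {0<..})" by simp
    qed
    moreover have "at (0::real) within {0..} = at 0 within {0<..}"
    proof -
      have "{0::real..} - {0} = {0<..} - {0}" by auto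
      thus ?thesis unfolding at_within_def by simp
    qed
    ultimately show ?thesis using True C0 by (simp add: continuous_within)
  qed
qed


definition "G u = integral {0..u} C"

lemma G_deriv_within: "b \<ge> 0 \<Longrightarrow> u \<in> {0..b} \<Longrightarrow> (G has_real_derivative C u) (at u within {0..b})"
  unfolding G_def
  by (rule integral_has_real_derivative) (rule continuous_on_subset[OF C_cont], auto)

lemma G_deriv: "u > 0 \<Longrightarrow> (G has_real_derivative C u) (at u)"
proof -
  assume u: "u > 0"
  have "(G has_real_derivative C u) (at u within {0..u+1})"
    using u by (intro G_deriv_within) auto
  moreover have "at u within {0..u+1} = at u"
    using u by (intro at_within_interior) auto
  ultimately show ?thesis by simp
qed

lemma G0: "G 0 = 0" by (simp add: G_def)

lemma G_mono: "0 < a \<Longrightarrow> a \<le> b \<Longrightarrow> G a \<le> G b"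
  by (rule DERIV_nonneg_imp_nondecreasing) (auto intro!: exI G_deriv less_imp_le[OF C_pos])

lemma G_pos: "a > 0 \<Longrightarrow> G a > 0"
proof -
  assume a: "a > 0"
  have cont: "continuous_on {0..a} G"
    by (rule DERIV_continuous_on[where D=C]) (rule G_deriv_within, use a in auto)
  obtain l z where lz: "0 < z" "z < a" "DERIV G z :> l" "G a - G 0 = (a - 0) * l"
    using MVT[OF a cont] G_deriv by (metis real_differentiable_def)
  have "l = C z" using lz(3) G_deriv[OF lz(1)] DERIV_unique by blast
  thus ?thesis using lz C_pos[OF lz(1)] a G0 by simp
qed

definition "K = P * (4 / A^2)"

lemma G_bound: "0 < a \<Longrightarrow> a \<le> b \<Longrightarrow> G b \<le> G a + K / \<eta>"
proof -
  assume a: "0 < a" "a \<le> b"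
  define H where "H u = G u + K * exp (-\<eta>*u) / \<eta>" for u
  have "H b \<le> H a"
  proof (rule DERIV_nonpos_imp_nonincreasing[OF a(2)])
    fix x assume x: "a \<le> x" "x \<le> b"
    have "DERIV H x :> C x + K * (exp (-\<eta>*x) * (-\<eta>)) / \<eta>"
    proof -
      have d2: "DERIV (\<lambda>u. K * exp (-\<eta>*u) / \<eta>) x :> K * (exp (-\<eta>*x) * (-\<eta>)) / \<eta>"
        by (auto intro!: derivative_eq_intros)
      have d1: "DERIV G x :> C x" using a x by (intro G_deriv) auto
      show ?thesis using DERIV_add[OF d1 d2] unfolding H_def[abs_def] by simp
    qed
    moreover have "C x + K * (exp (-\<eta>*x) * (-\<eta>)) / \<eta> \<le> 0"
      using C_le_exp[of x] a x pos by (simp add: K_def)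
    ultimately show "\<exists>y. DERIV H x :> y \<and> y \<le> 0" by blast
  qed
  moreover have "K * exp (-\<eta>*b) / \<eta> \<ge> 0" "K * exp (-\<eta>*a) / \<eta> \<le> K / \<eta>"
    using pos P_pos A_pos a by (auto simp: K_def divide_right_mono)
  ultimately show ?thesis unfolding H_def by linarith
qed

end



lemma two_abs_le: "2*\<bar>V*X\<bar> \<le> V^2 + (X::real)^2"
  using sum_squares_bound[of "\<bar>V\<bar>" "\<bar>X\<bar>"] by (simp add: abs_mult)

lemma quad_lower:
  fixes V X p e g :: real
  assumes "p > 0" "g > 0" "1/g \<ge> p" "e \<le> p/2" "e \<le> 1/2" "e \<ge> 0"
  shows "min p 1 / 2 * (V^2 + X^2) \<le> V^2/g + X^2 + 2*e*V*X"
proof -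
  have a: "2*\<bar>V*X\<bar> \<le> V^2 + X^2" by (rule two_abs_le)
  have "p * V^2 \<le> (1/g) * V^2" using assms by (intro mult_right_mono) auto
  hence b: "V^2/g \<ge> p * V^2" by simp
  have c1: "e * (2*\<bar>V*X\<bar>) \<le> e * (V^2 + X^2)" using a assms by (intro mult_left_mono) auto
  have c2: "(2*e) * (-\<bar>V*X\<bar>) \<le> (2*e) * (V*X)" using assms by (intro mult_left_mono) auto
  have d1: "e * V^2 \<le> p/2 * V^2" using assms by (intro mult_right_mono) auto
  have d2: "e * X^2 \<le> 1/2 * X^2" using assms by (intro mult_right_mono) auto
  have f1: "min p 1 / 2 * V^2 \<le> p/2 * V^2" by (intro mult_right_mono) auto
  have f2: "min p 1 / 2 * X^2 \<le> 1/2 * X^2" by (intro mult_right_mono) auto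
  show ?thesis using b c1 c2 d1 d2 f1 f2 by (simp add: algebra_simps)
qed

lemma quad_upper:
  fixes V X e g g0 :: real
  assumes "g0 > 0" "g \<ge> g0" "e \<le> 1/2" "e \<ge> 0"
  shows "V^2/g + X^2 + 2*e*V*X \<le> (1/g0 + 2) * (V^2 + X^2)"
proof -
  have a: "2*\<bar>V*X\<bar> \<le> V^2 + X^2" by (rule two_abs_le)
  have "(1/g) * V^2 \<le> (1/g0) * V^2" using assms by (intro mult_right_mono) (auto simp: frac_le)
  hence b: "V^2/g \<le> (1/g0) * V^2" by simp
  have c1: "e * (2*\<bar>V*X\<bar>) \<le> e * (V^2 + X^2)" using a assms by (intro mult_left_mono) auto
  have c2: "(2*e) * (V*X) \<le> (2*e) * \<bar>V*X\<bar>" using assms by (intro mult_left_mono) auto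
  have d1: "e * V^2 \<le> 1/2 * V^2" using assms by (intro mult_right_mono) auto
  have d2: "e * X^2 \<le> 1/2 * X^2" using assms by (intro mult_right_mono) auto
  have f: "0 \<le> (1/g0) * X^2" using assms by simp
  have e1: "(1/g0 + 2)*(V^2+X^2) = (1/g0)*V^2 + (1/g0)*X^2 + 2*V^2 + 2*X^2" by (simp add: algebra_simps)
  have e2: "2*e*V*X = (2*e)*(V*X)" "e*(2*\<bar>V*X\<bar>) = (2*e)*\<bar>V*X\<bar>" "e*(V^2+X^2) = e*V^2 + e*X^2"
    by (simp_all add: algebra_simps)
  show ?thesis using b c1 c2 d1 d2 f e1 e2 zero_le_power2[of V] zero_le_power2[of X] by linarith
qed

lemma deriv_bound:
  fixes V X e g g0 p \<beta> gd :: real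
  assumes "g0 > 0" "g \<ge> g0" "p > 0" "1/g \<ge> p" "e \<ge> 0" "\<beta> > 0" "gd \<ge> 0"
    "e * (2 + \<beta>^2/g0) \<le> \<beta> * p"
  shows "- gd * V^2 / g^2 + 2 * V * (- \<beta> * V - g * X) / g + 2 * X * V
         + 2 * e * ((- \<beta> * V - g * X) * X + V * V) \<le> - min (\<beta>*p) (e*g0) * (V^2 + X^2)"
proof -
  have g: "g > 0" using assms by linarith
  have s1: "2 * V * (- \<beta> * V - g * X) / g = -2*\<beta>*((1/g)*V^2) - 2*V*X"
    using g by (simp add: field_simps power2_eq_square)
  have s2: "- gd * V^2 / g^2 \<le> 0" using assms by (simp add: divide_nonpos_nonneg)
  have s3: "p * V^2 \<le> (1/g) * V^2" using assms by (intro mult_right_mono) auto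
  have s4: "g0 * X^2 \<le> g * X^2" using assms by (intro mult_right_mono) auto
  have s5: "-2*\<beta>*(V*X) \<le> (\<beta>^2/g0) * V^2 + g0 * X^2"
  proof -
    have "0 \<le> (\<beta>*V + g0*X)^2" by simp
    hence "0 \<le> \<beta>^2*V^2 + 2*\<beta>*g0*(V*X) + g0^2*X^2" by (simp add: power2_eq_square algebra_simps)
    hence "0 \<le> (\<beta>^2*V^2 + 2*\<beta>*g0*(V*X) + g0^2*X^2) / g0" using assms by simp
    also have "\<dots> = (\<beta>^2/g0) * V^2 + 2*\<beta>*(V*X) + g0 * X^2"
      using assms by (simp add: field_simps power2_eq_square)
    finally show ?thesis by linarith
  qed
  have s6: "e * (-2*\<beta>*(V*X)) \<le> e * ((\<beta>^2/g0) * V^2 + g0 * X^2)"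
    using s5 assms by (intro mult_left_mono) auto
  have s7: "e * (2 + \<beta>^2/g0) * V^2 \<le> \<beta> * p * V^2" using assms by (intro mult_right_mono) auto
  have s8: "2*e*(g0 * X^2) \<le> 2*e*(g * X^2)" using s4 assms by (intro mult_left_mono) auto
  have s9: "2*\<beta>*(p * V^2) \<le> 2*\<beta>*((1/g) * V^2)" using s3 assms by (intro mult_left_mono) auto
  have m1: "min (\<beta>*p) (e*g0) * V^2 \<le> \<beta>*p * V^2" by (intro mult_right_mono) auto
  have m2: "min (\<beta>*p) (e*g0) * X^2 \<le> e*g0 * X^2" by (intro mult_right_mono) auto
  have "- gd * V^2 / g^2 + 2 * V * (- \<beta> * V - g * X) / g + 2 * X * V
         + 2 * e * ((- \<beta> * V - g * X) * X + V * V)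
       = - gd * V^2 / g^2 - 2*\<beta>*((1/g)*V^2) + 2*e*V^2 + e*(-2*\<beta>*(V*X)) - 2*e*(g*X^2)"
    unfolding s1 by (simp add: algebra_simps power2_eq_square)
  also have "\<dots> \<le> - min (\<beta>*p) (e*g0) * (V^2 + X^2)"
    using s2 s6 s7 s8 s9 m1 m2 by (simp add: algebra_simps)
  finally show ?thesis .
qed



theorem theorem5p1:
  fixes N :: nat and \<beta> \<gamma> \<xi> \<eta> D R tbar :: real
  assumes "N \<ge> 1" "\<beta> > 0" "\<gamma> > 0" "\<xi> > 0" "\<eta> > 0" "D > 0" "R > 0" "tbar > 0"
  shows "\<exists>(U :: real \<Rightarrow> real \<times> real \<Rightarrow> real) k1 k2 k3. k1 > 0 \<and> k2 > 0 \<and> k3 > 0 \<and>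
    (\<forall>t V X. t \<ge> tbar \<longrightarrow>
       k2 * (norm (V, X))^2 \<le> U t (V, X) \<and> U t (V, X) \<le> k1 * (norm (V, X))^2 \<and>
       (\<exists>U'. ((\<lambda>(s, y). U s y) has_derivative U') (at (t, (V, X))) \<and>
          U' (1, (- \<beta> * V - gfun N \<gamma> \<xi> \<eta> D R t * X, V)) \<le> - k3 * (norm (V, X))^2))"
proof -
  interpret params \<gamma> \<xi> \<eta> D R using assms by unfold_locales auto
  define g where "g = gfun N \<gamma> \<xi> \<eta> D R"
  have g_eq: "g s = real N * G s" for s
    unfolding g_def gfun_eq G_def C_def ..
  have Npos: "real N > 0" using assms by simp
  define g0 where "g0 = real N * G tbar"
  define g1 where "g1 = real N * (G tbar + K / \<eta>)"
  have g0pos: "g0 > 0" unfolding g0_def using G_pos[OF assms(8)] Npos by simp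
  have gbounds: "g0 \<le> g t \<and> g t \<le> g1" if "t \<ge> tbar" for t
    unfolding g_eq g0_def g1_def using G_mono[OF assms(8) that] G_bound[OF assms(8) that] Npos
    by (auto intro: mult_left_mono)
  have gderiv: "(g has_real_derivative real N * C t) (at t)" if "t > 0" for t
    unfolding g_eq[abs_def] using G_deriv[OF that] by (intro derivative_eq_intros) auto
  have g1pos: "g1 > 0" using gbounds[of tbar] g0pos by simp
  define p where "p = 1 / g1"
  have ppos: "p > 0" using g1pos by (simp add: p_def)
  define e where "e = min (min (p/2) (1/2)) (\<beta>*p/(2 + \<beta>^2/g0))"
  have den: "2 + \<beta>^2/g0 > 0" using g0pos by (simp add: add_pos_nonneg)
  have epos: "e > 0" unfolding e_def using ppos assms den by simp
  have e0: "e \<le> min (p/2) (1/2)" unfolding e_def by (rule min.cobounded1)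
  have e1: "e \<le> p/2" "e \<le> 1/2" using e0 by auto
  have e2: "e * (2 + \<beta>^2/g0) \<le> \<beta> * p"
  proof -
    have "e \<le> \<beta>*p/(2 + \<beta>^2/g0)" unfolding e_def by auto
    thus ?thesis using den by (simp add: le_divide_eq)
  qed
  define U where "U = (\<lambda>(s::real) (y::real\<times>real). (fst y)^2 / g s + (snd y)^2 + 2*e*fst y * snd y)"
  define k1 where "k1 = 1/g0 + 2"
  define k2 where "k2 = min p 1 / 2"
  define k3 where "k3 = min (\<beta>*p) (e*g0)"
  have npair: "(norm (V, X))^2 = V^2 + X^2" for V X :: real
    by (simp add: norm_Pair)
  show ?thesis
  proof (rule exI[of _ U], rule exI[of _ k1], rule exI[of _ k2], rule exI[of _ k3], intro conjI allI impI)
    have "1/g0 > 0" using g0pos by simp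
    thus "k1 > 0" unfolding k1_def by linarith
    show "k2 > 0" "k3 > 0" unfolding k2_def k3_def
      using g0pos ppos epos assms by auto
    fix t V X :: real assume t: "tbar \<le> t"
    have gb: "g0 \<le> g t" "g t \<le> g1" using gbounds[OF t] by auto
    have gtpos: "g t > 0" using gb g0pos by linarith
    have pg: "1 / g t \<ge> p" unfolding p_def using gb gtpos by (simp add: frac_le)
    show "k2 * (norm (V, X))^2 \<le> U t (V, X)"
      unfolding npair k2_def U_def using quad_lower[OF ppos gtpos pg e1] epos by simp
    show "U t (V, X) \<le> k1 * (norm (V, X))^2"
      unfolding npair k1_def U_def using quad_upper[OF g0pos gb(1) e1(2)] epos by simp
    define gd where "gd = real N * C t"
    have tpos: "t > 0" using t assms by linarith
    have gdnn: "gd \<ge> 0" unfolding gd_def using C_pos[OF tpos] by simp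
    have dg: "(g has_derivative (\<lambda>h. gd * h)) (at t)"
      using gderiv[OF tpos] unfolding gd_def has_field_derivative_def by simp
    let ?U' = "\<lambda>(ds::real, dv::real, dx::real). - gd * ds * V^2 / (g t)^2 + 2 * V * dv / g t + 2 * X * dx
         + 2 * e * (dv * X + V * dx)"
    have dgf: "((\<lambda>q::real\<times>real\<times>real. g (fst q)) has_derivative (\<lambda>h. gd * fst h)) (at (t, (V, X)))"
      using has_derivative_compose[OF has_derivative_fst[OF has_derivative_ident], of g "(*) gd" "(t,V,X)" UNIV] dg by simp
    have ueq: "(\<lambda>(s, y). U s y) = (\<lambda>q::real\<times>real\<times>real. (fst (snd q))^2 / g (fst q) + (snd (snd q))^2 + 2*e*fst (snd q) * snd (snd q))"
      by (auto simp: U_def)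
    have gtne: "g (fst (t, V, X)) \<noteq> 0" using gtpos by simp
    have "((\<lambda>(s, y). U s y) has_derivative ?U') (at (t, (V, X)))"
      unfolding ueq
      apply (rule has_derivative_eq_rhs)
       apply (rule derivative_eq_intros dgf refl gtne)+
      apply (rule ext)
      apply (clarsimp simp: field_simps power2_eq_square)
      done
    moreover have "?U' (1, (- \<beta> * V - gfun N \<gamma> \<xi> \<eta> D R t * X, V)) \<le> - k3 * (norm (V, X))^2"
      unfolding npair k3_def g_def[symmetric]
      using deriv_bound[OF g0pos gb(1) ppos pg less_imp_le[OF epos] assms(2) gdnn e2, of V X]
      by simp
    ultimately show "\<exists>U'. ((\<lambda>(s, y). U s y) has_derivative U') (at (t, (V, X))) \<and>
          U' (1, (- \<beta> * V - gfun N \<gamma> \<xi> \<eta> D R t * X, V)) \<le> - k3 * (norm (V, X))^2"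
      by blast
  qed
qed

end
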